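(* Let $G=(V,E)$ be a finite connected graph (with edge weights $w_{xy}>0$ and vertex measure $\mu:V\to(0,\infty)$) which satisfies condition CD$(F;0)$ for some CD-function $F$, and let $\varphi$ be the relaxation function associated with $F$. Suppose $u:[0,\infty)\times V\to(0,\infty)$ is a solution of the heat equation on $G$. Then $$-\Delta(\log u)(t,x)\le\varphi(t)\quad\text{for all }(t,x)\in(0,\infty)\times V,$$ and consequently $$\Psi_\Upsilon(\log u)(t,x)-\partial_t(\log u)(t,x)\le\varphi(t)\quad\text{for all }(t,x)\in(0,\infty)\times V.$$
   Context: Graphs are undirected and locally finite; $x\sim y$ means $xy\in E$; each edge has a weight $w_{xy}=w_{yx}>0$; $\mu:V\to(0,\infty)$. The Laplacian is $\Delta u(x)=\frac1{\mu(x)}\sum_{y\sim x}w_{xy}(u(y)-u(x))$ and $L:=-\Delta$. For $H:\mathbb R\to\mathbb R$ and $v:V\to\mathbb R$, $\Psi_H(v)(x)=\frac1{\mu(x)}\sum_{y\sim x}w_{xy}H(v(y)-v(x))$. Let $\Upsilon(z)=e^z-1-z$, so $\Upsilon'(z)=e^z-1$. A CD-function is a continuous $F:[0,\infty)\to[0,\infty)$ with $F(0)=0$, $x\mapsto F(x)/x$ strictly increasing on $(0,\infty)$, and $\int_1^\infty dr/F(r)<\infty$. Its relaxation function is the unique positive solution $\varphi:(0,\infty)\to(0,\infty)$ of $\dot\varphi(t)+F(\varphi(t))=0$ for $t>0$ with $\varphi(t)\to\infty$ as $t\to0+$. $G$ satisfies CD$(F;0)$ if for every $x\in V$ and every $v:V\to\mathbb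 R$ with $Lv(x)>0$ and $Lv(x)\ge Lv(y)$ for all $y\sim x$, one has $\Delta\Psi_{\Upsilon'}(v)(x)\ge F(Lv(x))$. A solution of the heat equation is a function $u(t,x)$, continuously differentiable in $t$, with $\partial_tu=\Delta u$ on $[0,\infty)\times V$ (time derivative one-sided at $t=0$). *)

theory Defs
  imports "HOL-Analysis.Analysis"
begin

definition weighted_graph :: "('a::finite \<Rightarrow> 'a \<Rightarrow> real) \<Rightarrow> ('a \<Rightarrow> real) \<Rightarrow> bool" where
  "weighted_graph w \<mu> \<longleftrightarrow>
     (\<forall>x y. w x y = w y x) \<and> (\<forall>x y. 0 \<le> w x y) \<and> (\<forall>x. w x x = 0) \<and> (\<forall>x. 0 < \<mu> x)"

definition adj :: "('a \<Rightarrow> 'a \<Rightarrow> real) \<Rightarrow> 'a \<Rightarrow> 'a \<Rightarrow> bool" where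
  "adj w x y \<longleftrightarrow> 0 < w x y"

definition connected_graph :: "('a \<Rightarrow> 'a \<Rightarrow> real) \<Rightarrow> bool" where
  "connected_graph w \<longleftrightarrow> (\<forall>x y. (x, y) \<in> {(a, b). adj w a b}\<^sup>*)"

definition graph_laplacian :: "('a::finite \<Rightarrow> 'a \<Rightarrow> real) \<Rightarrow> ('a \<Rightarrow> real) \<Rightarrow> ('a \<Rightarrow> real) \<Rightarrow> 'a \<Rightarrow> real" where
  "graph_laplacian w \<mu> u x = (1 / \<mu> x) * (\<Sum>y\<in>{y. adj w x y}. w x y * (u y - u x))"

definition Psi :: "('a::finite \<Rightarrow> 'a \<Rightarrow> real) \<Rightarrow> ('a \<Rightarrow> real) \<Rightarrow> (real \<Rightarrow> real) \<Rightarrow> ('a \<Rightarrow> real) \<Rightarrow> 'a \<Rightarrow> real" where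
  "Psi w \<mu> H v x = (1 / \<mu> x) * (\<Sum>y\<in>{y. adj w x y}. w x y * H (v y - v x))"

definition Upsilon :: "real \<Rightarrow> real" where
  "Upsilon z = exp z - 1 - z"

definition Upsilon' :: "real \<Rightarrow> real" where
  "Upsilon' z = exp z - 1"

definition CD_function :: "(real \<Rightarrow> real) \<Rightarrow> bool" where
  "CD_function F \<longleftrightarrow> continuous_on {0..} F \<and> (\<forall>x\<ge>0. 0 \<le> F x) \<and> F 0 = 0 \<and>
     strict_mono_on {0<..} (\<lambda>x. F x / x) \<and> (\<lambda>r. 1 / F r) integrable_on {1..}"

text \<open>phi is the relaxation function of F (positive solution of phi' + F(phi) = 0 on (0,oo),
  blowing up at 0+; it is unique).\<close>
definition relaxation_function :: "(real \<Rightarrow> real) \<Rightarrow> (real \<Rightarrow> real) \<Rightarrow> bool" where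
  "relaxation_function F \<phi> \<longleftrightarrow>
     (\<forall>t>0. 0 < \<phi> t \<and> (\<phi> has_real_derivative - F (\<phi> t)) (at t)) \<and>
     filterlim \<phi> at_top (at_right 0)"

definition CD0 :: "('a::finite \<Rightarrow> 'a \<Rightarrow> real) \<Rightarrow> ('a \<Rightarrow> real) \<Rightarrow> (real \<Rightarrow> real) \<Rightarrow> bool" where
  "CD0 w \<mu> F \<longleftrightarrow> (\<forall>x v.
     0 < - graph_laplacian w \<mu> v x \<and>
     (\<forall>y. adj w x y \<longrightarrow> - graph_laplacian w \<mu> v y \<le> - graph_laplacian w \<mu> v x)
     \<longrightarrow> F (- graph_laplacian w \<mu> v x) \<le> graph_laplacian w \<mu> (Psi w \<mu> Upsilon' v) x)"

text \<open>Solution of the heat equation on [0,oo) x V (one-sided derivative at t = 0).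
  Continuity of the time derivative is automatic, since it equals the Laplacian of u(t).\<close>
definition heat_solution :: "('a::finite \<Rightarrow> 'a \<Rightarrow> real) \<Rightarrow> ('a \<Rightarrow> real) \<Rightarrow> (real \<Rightarrow> 'a \<Rightarrow> real) \<Rightarrow> bool" where
  "heat_solution w \<mu> u \<longleftrightarrow> (\<forall>x. \<forall>t\<ge>0.
     ((\<lambda>s. u s x) has_real_derivative graph_laplacian w \<mu> (u t) x) (at t within {0..}))"

end

theory Submission imports Defs begin

lemma at_pos_within: "(t::real) > 0 \<Longrightarrow> at t within {0..} = at t"
proof -
  assume "(t::real) > 0"
  then have "t \<in> interior {0..}" unfolding interior_real_atLeast by simp
  then show ?thesis by (rule at_within_interior)
qed

lemma u_deriv:
  assumes "heat_solution w \<mu> u" "t > 0"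
  shows "((\<lambda>s. u s x) has_real_derivative graph_laplacian w \<mu> (u t) x) (at t)"
proof -
  have hs: "\<forall>x. \<forall>t\<ge>0. ((\<lambda>s. u s x) has_real_derivative graph_laplacian w \<mu> (u t) x) (at t within {0..})"
    using assms(1) unfolding heat_solution_def .
  have "((\<lambda>s. u s x) has_real_derivative graph_laplacian w \<mu> (u t) x) (at t within {0..})"
    using hs[rule_format, of t x] assms(2) by (simp only: less_imp_le)
  then show ?thesis unfolding at_pos_within[OF assms(2)] .
qed

lemma lnu_deriv:
  assumes "heat_solution w \<mu> u" "t > 0" "\<forall>t\<ge>0. \<forall>x. 0 < u t x"
  shows "((\<lambda>s. ln (u s x)) has_real_derivative graph_laplacian w \<mu> (u t) x / u t x) (at t)"
proof -
  have p: "0 < u t x" using assms(2,3) by simp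
  have d: "((\<lambda>s. ln (u s x)) has_real_derivative inverse (u t x) * graph_laplacian w \<mu> (u t) x) (at t)"
    by (rule DERIV_chain2[OF DERIV_ln[OF p] u_deriv[OF assms(1,2)]])
  have e: "inverse (u t x) * graph_laplacian w \<mu> (u t) x = graph_laplacian w \<mu> (u t) x / u t x"
    by (rule divide_inverse_commute[symmetric])
  show ?thesis using d unfolding e .
qed


lemma D_eq:
  assumes "\<And>z. 0 < v z"
  shows "graph_laplacian w \<mu> v y / v y = Psi w \<mu> Upsilon' (\<lambda>z. ln (v z)) y"
proof -
  have "graph_laplacian w \<mu> v y / v y = (1 / \<mu> y) * ((\<Sum>z\<in>{z. adj w y z}. w y z * (v z - v y)) / v y)"
    unfolding graph_laplacian_def by simp
  also have "(\<Sum>z\<in>{z. adj w y z}. w y z * (v z - v y)) / v y = (\<Sum>z\<in>{z. adj w y z}. w y z * Upsilon' (ln (v z) - ln (v y)))"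
    unfolding sum_divide_distrib
  proof (rule sum.cong[OF refl])
    fix z
    have pz: "0 < v z" and py: "0 < v y" using assms by auto
    have e: "exp (ln (v z) - ln (v y)) = v z / v y"
      unfolding exp_diff exp_ln[OF pz] exp_ln[OF py] ..
    have q: "(v z - v y) / v y = v z / v y - 1"
      using py by (simp add: diff_divide_distrib)
    have "w y z * (v z - v y) / v y = w y z * (v z / v y - 1)"
      unfolding times_divide_eq_right[symmetric] q ..
    then show "w y z * (v z - v y) / v y = w y z * Upsilon' (ln (v z) - ln (v y))"
      unfolding Upsilon'_def e .
  qed
  finally show ?thesis unfolding Psi_def by simp
qed

lemma f_deriv:
  assumes "\<And>y. ((\<lambda>s. g s y) has_real_derivative D y) (at t)"
  shows "((\<lambda>s. - graph_laplacian w \<mu> (g s) x) has_real_derivative - graph_laplacian w \<mu> D x) (at t)"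
proof -
  have d1: "((\<lambda>s. w x y * (g s y - g s x)) has_real_derivative w x y * (D y - D x)) (at t)" for y
    by (intro DERIV_cmult DERIV_diff assms)
  have d2: "((\<lambda>s. \<Sum>y\<in>{y. adj w x y}. w x y * (g s y - g s x)) has_real_derivative
     (\<Sum>y\<in>{y. adj w x y}. w x y * (D y - D x))) (at t)"
    by (rule DERIV_sum[OF d1])
  have d3: "((\<lambda>s. - (1 / \<mu> x * (\<Sum>y\<in>{y. adj w x y}. w x y * (g s y - g s x)))) has_real_derivative
     - (1 / \<mu> x * (\<Sum>y\<in>{y. adj w x y}. w x y * (D y - D x)))) (at t)"
    by (rule DERIV_minus[OF DERIV_cmult[OF d2]])
  show ?thesis unfolding graph_laplacian_def by (rule d3)
qed

lemma F_mono:
  assumes "CD_function F" "0 < a" "a < b"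
  shows "F a < F b"
proof -
  have sm: "strict_mono_on {0<..} (\<lambda>x. F x / x)" and nn: "\<forall>x\<ge>0. 0 \<le> F x"
    using assms(1) unfolding CD_function_def by auto
  have q: "F a / a < F b / b" using sm assms(2,3) by (simp add: strict_mono_on_def)
  have q0: "0 \<le> F a / a" using nn assms(2) by simp
  have e1: "F a = a * (F a / a)" using assms(2) by simp
  have e2: "F b = b * (F b / b)" using assms by simp
  have "a * (F a / a) \<le> b * (F a / a)" using q0 assms by (intro mult_right_mono) auto
  moreover have "b * (F a / a) < b * (F b / b)" using q assms by (intro mult_strict_left_mono) auto
  ultimately show ?thesis using e1 e2 by linarith
qed

lemma f_cont0:
  assumes "heat_solution w \<mu> u" "\<forall>t\<ge>0. \<forall>x. 0 < u t x"
  shows "((\<lambda>s. - graph_laplacian w \<mu> (\<lambda>y. ln (u s y)) x) \<longlongrightarrow> - graph_laplacian w \<mu> (\<lambda>y. ln (u 0 y)) x) (at_right 0)"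
proof -
  have c: "((\<lambda>s. u s y) \<longlongrightarrow> u 0 y) (at_right 0)" for y
  proof -
    have "continuous (at 0 within {0..}) (\<lambda>s. u s y)"
      using assms(1) unfolding heat_solution_def by (meson DERIV_continuous order_refl)
    then have "((\<lambda>s. u s y) \<longlongrightarrow> u 0 y) (at 0 within {0..})"
      by (simp add: continuous_within)
    then show ?thesis by (rule tendsto_within_subset) auto
  qed
  have p: "u 0 y \<noteq> 0" for y using assms(2) by (metis less_irrefl order_refl)
  show ?thesis unfolding graph_laplacian_def
    by (intro tendsto_intros c p)
qed

lemma Psi_split:
  "Psi w \<mu> Upsilon' v x = graph_laplacian w \<mu> v x + Psi w \<mu> Upsilon v x"
proof -
  have "(\<Sum>y\<in>{y. adj w x y}. w x y * Upsilon' (v y - v x)) =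
        (\<Sum>y\<in>{y. adj w x y}. w x y * (v y - v x) + w x y * Upsilon (v y - v x))"
    by (rule sum.cong) (auto simp: Upsilon_def Upsilon'_def algebra_simps)
  then show ?thesis unfolding Psi_def graph_laplacian_def
    by (simp add: sum.distrib distrib_left)
qed


theorem theorem1p1:
  fixes w :: "'a::finite \<Rightarrow> 'a \<Rightarrow> real" and \<mu> :: "'a \<Rightarrow> real"
    and F \<phi> :: "real \<Rightarrow> real" and u :: "real \<Rightarrow> 'a \<Rightarrow> real"
  assumes "weighted_graph w \<mu>" and "connected_graph w"
    and "CD_function F" and "CD0 w \<mu> F"
    and "relaxation_function F \<phi>"
    and "heat_solution w \<mu> u" and "\<forall>t\<ge>0. \<forall>x. 0 < u t x"
  shows "(\<forall>t>0. \<forall>x. - graph_laplacian w \<mu> (\<lambda>y. ln (u t y)) x \<le> \<phi> t) \<and>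
    (\<forall>t>0. \<forall>x. Psi w \<mu> Upsilon (\<lambda>y. ln (u t y)) x - deriv (\<lambda>s. ln (u s x)) t \<le> \<phi> t)"
proof -
  define f where "f x s = - graph_laplacian w \<mu> (\<lambda>y. ln (u s y)) x" for x s
  define D where "D t y = graph_laplacian w \<mu> (u t) y / u t y" for t y
  have pos: "\<And>t x. t \<ge> 0 \<Longrightarrow> 0 < u t x" using assms(7) by auto
  have Dpsi: "D t = Psi w \<mu> Upsilon' (\<lambda>z. ln (u t z))" if "t \<ge> 0" for t
    unfolding D_def using D_eq[of "u t"] pos[OF that] by auto
  have lnd: "((\<lambda>s. ln (u s y)) has_real_derivative D t y) (at t)" if "t > 0" for t y
    unfolding D_def by (rule lnu_deriv[OF assms(6) that assms(7)])
  have fd: "((\<lambda>s. f x s) has_real_derivative - graph_laplacian w \<mu> (D t) x) (at t)" if "t > 0" for t x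
    unfolding f_def by (rule f_deriv[where g="\<lambda>s y. ln (u s y)"]) (rule lnd[OF that])
  have phid: "(\<phi> has_real_derivative - F (\<phi> t)) (at t)" "0 < \<phi> t" if "t > 0" for t
    using assms(5) that unfolding relaxation_function_def by auto
  have philim: "filterlim \<phi> at_top (at_right 0)"
    using assms(5) unfolding relaxation_function_def by auto
  have part1: "\<forall>t>0. \<forall>x. f x t \<le> \<phi> t"
  proof (intro allI impI, rule ccontr)
    fix t1 x1 assume t1: "t1 > 0" and nb: "\<not> f x1 t1 \<le> \<phi> t1"
    then have big: "f x1 t1 > \<phi> t1" by simp
    define C where "C = Max (range (\<lambda>x. f x 0 + 1))"
    have ev1: "eventually (\<lambda>s. \<forall>x. f x s < f x 0 + 1) (at_right 0)"
    proof (intro eventually_all_finite)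
      fix x
      have "((\<lambda>s. f x s) \<longlongrightarrow> f x 0) (at_right 0)"
        unfolding f_def by (rule f_cont0[OF assms(6,7)])
      then show "eventually (\<lambda>s. f x s < f x 0 + 1) (at_right 0)"
        by (rule order_tendstoD(2)) simp
    qed
    have ev2: "eventually (\<lambda>s. C < \<phi> s) (at_right 0)"
      using philim filterlim_at_top_dense by blast
    have ev3: "eventually (\<lambda>s. 0 < s \<and> s < t1) (at_right 0)"
      unfolding eventually_at_right_field using t1 by auto
    obtain a where a: "\<forall>x. f x a < f x 0 + 1" "C < \<phi> a" "0 < a" "a < t1"
      using eventually_happens'[OF _ eventually_conj[OF ev1 eventually_conj[OF ev2 ev3]]] by auto
    have aleq: "f x a \<le> \<phi> a" for x
    proof -
      have "f x 0 + 1 \<le> C" unfolding C_def by (rule Max_ge) auto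
      moreover have "f x a < f x 0 + 1" using a(1) by blast
      ultimately show ?thesis using a(2) by linarith
    qed
    have cont: "continuous_on {a..t1} (\<lambda>s. f x s - \<phi> s)" for x
    proof (intro continuous_on_diff)
      show "continuous_on {a..t1} (f x)"
        by (rule DERIV_continuous_on[OF has_field_derivative_at_within[OF fd]]) (use a in auto)
      show "continuous_on {a..t1} \<phi>"
        by (rule DERIV_continuous_on[OF has_field_derivative_at_within[OF phid(1)]]) (use a in auto)
    qed
    have "\<forall>x. \<exists>tx\<in>{a..t1}. \<forall>s\<in>{a..t1}. f x s - \<phi> s \<le> f x tx - \<phi> tx"
      using continuous_attains_sup[OF compact_Icc _ cont] a by auto
    then have "\<exists>T. \<forall>x. T x \<in> {a..t1} \<and> (\<forall>s\<in>{a..t1}. f x s - \<phi> s \<le> f x (T x) - \<phi> (T x))"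
      by (intro choice) (simp add: Bex_def)
    then obtain T where T0: "\<forall>x. T x \<in> {a..t1} \<and> (\<forall>s\<in>{a..t1}. f x s - \<phi> s \<le> f x (T x) - \<phi> (T x))"
      by blast
    have T: "\<And>x. T x \<in> {a..t1}" "\<And>x s. s \<in> {a..t1} \<Longrightarrow> f x s - \<phi> s \<le> f x (T x) - \<phi> (T x)"
      using T0 by auto
    define m where "m x = f x (T x) - \<phi> (T x)" for x
    have "Max (range m) \<in> range m" by (rule Max_in) auto
    then obtain xs where xs_eq: "m xs = Max (range m)" by (metis rangeE)
    have xs: "m x \<le> m xs" for x unfolding xs_eq by (rule Max_ge) auto
    define ts where "ts = T xs"
    have m1: "f x1 t1 - \<phi> t1 \<le> m x1" unfolding m_def using T(2)[of t1 x1] a by auto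
    have mpos: "m xs > 0" using m1 xs[of x1] big by linarith
    have ts_ge: "a \<le> ts" "ts \<le> t1" using T(1)[of xs] unfolding ts_def by auto
    have ts_gt: "a < ts"
    proof (rule ccontr)
      assume "\<not> a < ts"
      then have "ts = a" using ts_ge by simp
      then show False using mpos aleq[of xs] unfolding m_def ts_def by simp
    qed
    have tspos: "ts > 0" using ts_gt a by simp
    have mts: "m xs = f xs ts - \<phi> ts" unfolding m_def ts_def ..
    have Lbig: "f xs ts > \<phi> ts" using mpos mts by simp
    have phipos: "\<phi> ts > 0" using phid(2)[OF tspos] .
    have maxv: "f y ts \<le> f xs ts" for y
      using T(2)[of ts y] ts_ge xs[of y] mts unfolding m_def by auto
    have "F (f xs ts) \<le> graph_laplacian w \<mu> (Psi w \<mu> Upsilon' (\<lambda>z. ln (u ts z))) xs"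
    proof -
      have c1: "0 < - graph_laplacian w \<mu> (\<lambda>z. ln (u ts z)) xs"
        using Lbig phipos unfolding f_def by linarith
      have c2: "\<forall>y. adj w xs y \<longrightarrow> - graph_laplacian w \<mu> (\<lambda>z. ln (u ts z)) y \<le> - graph_laplacian w \<mu> (\<lambda>z. ln (u ts z)) xs"
        using maxv unfolding f_def by blast
      have "F (- graph_laplacian w \<mu> (\<lambda>z. ln (u ts z)) xs) \<le> graph_laplacian w \<mu> (Psi w \<mu> Upsilon' (\<lambda>z. ln (u ts z))) xs"
        using assms(4) c1 c2 unfolding CD0_def by blast
      then show ?thesis unfolding f_def .
    qed
    then have CDi: "F (f xs ts) \<le> graph_laplacian w \<mu> (D ts) xs"
      using Dpsi[of ts] tspos by simp
    have Fm: "F (\<phi> ts) < F (f xs ts)" by (rule F_mono[OF assms(3) phipos Lbig])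
    have kd: "((\<lambda>s. f xs s - \<phi> s) has_real_derivative
        (- graph_laplacian w \<mu> (D ts) xs - - F (\<phi> ts))) (at ts)"
      by (intro DERIV_diff fd tspos phid(1))
    have neg: "- graph_laplacian w \<mu> (D ts) xs - - F (\<phi> ts) < 0" using CDi Fm by linarith
    obtain d where d: "d > 0" "\<And>h. h > 0 \<Longrightarrow> h < d \<Longrightarrow> f xs ts - \<phi> ts < f xs (ts - h) - \<phi> (ts - h)"
      using DERIV_neg_dec_left[OF kd neg] by auto
    define h where "h = min (d/2) ((ts - a)/2)"
    have h1a: "h \<le> d/2" unfolding h_def by (rule min.cobounded1)
    have h1b: "h \<le> (ts - a)/2" unfolding h_def by (rule min.cobounded2)
    have h1c: "h > 0" unfolding h_def using d(1) ts_gt by simp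
    note h1 = h1a h1b h1c
    have h: "h > 0" "h < d" "ts - h \<in> {a..t1}" using h1 d(1) ts_gt ts_ge by auto
    have "f xs (ts - h) - \<phi> (ts - h) \<le> f xs ts - \<phi> ts"
      using T(2)[OF h(3), of xs] unfolding ts_def .
    then show False using d(2)[OF h(1,2)] by linarith
  qed
  show ?thesis
  proof
    show "\<forall>t>0. \<forall>x. - graph_laplacian w \<mu> (\<lambda>y. ln (u t y)) x \<le> \<phi> t"
      using part1 unfolding f_def .
    show "\<forall>t>0. \<forall>x. Psi w \<mu> Upsilon (\<lambda>y. ln (u t y)) x - deriv (\<lambda>s. ln (u s x)) t \<le> \<phi> t"
    proof (intro allI impI)
      fix t x assume t: "(t::real) > 0"
      have "deriv (\<lambda>s. ln (u s x)) t = D t x" by (rule DERIV_imp_deriv[OF lnd[OF t]])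
      also have "\<dots> = graph_laplacian w \<mu> (\<lambda>y. ln (u t y)) x + Psi w \<mu> Upsilon (\<lambda>y. ln (u t y)) x"
        using Dpsi[of t] t Psi_split by simp
      finally show "Psi w \<mu> Upsilon (\<lambda>y. ln (u t y)) x - deriv (\<lambda>s. ln (u s x)) t \<le> \<phi> t"
        using part1 t unfolding f_def by fastforce
    qed
  qed
qed

end
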